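(* Let $K$ be a field of characteristic zero, let $A=K[Y][X;\mathrm{id}_{K[Y]},\frac{d}{dY}]$ be the first Weyl algebra, and for $k\in K$ let $\alpha_k\colon A\to A$ be the $K$-linear map with $\alpha_k(p(Y)X^m)=p(Y+k)X^m$ for all $p(Y)\in K[Y]$, $m\in\mathbb{N}$. Define $u*v:=\alpha_k(u\cdot v)$ for $u,v\in A$. Then for every $k\in K$ the hom-associative algebra $(A,*,\alpha_k)$ is simple, i.e. its only two-sided ideals (with respect to $*$) are $0$ and $A$.
   Context: The first Weyl algebra $A=K[Y][X;\mathrm{id}_{K[Y]},\frac{d}{dY}]$ consists of the polynomials $\sum_{i}p_i(Y)X^i$ with $p_i\in K[Y]$, with the associative multiplication determined by $p(Y)X^m\cdot q(Y)X^n=\sum_{i=0}^m\binom{m}{i}p(Y)q^{(m-i)}(Y)X^{i+n}$ (so $XY-YX=1$). $\mathbb{N}$ denotes the non-negative integers. An ideal of $(A,* )$ is an additive subgroup (indeed $K$-subspace) $I$ with $A*I\subseteq I$ and $I*A\subseteq I$. *)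

theory Defs
  imports "HOL-Computational_Algebra.Polynomial"
begin

text \<open>Elements of the first Weyl algebra A = K[Y][X; id, d/dY] are represented as
  polynomials in X with coefficients in K[Y], i.e. u = sum_i p_i(Y) X^i with
  p_i = coeff u i.  Type: 'a poly poly.\<close>

definition weyl_mult :: "'a::field poly poly \<Rightarrow> 'a poly poly \<Rightarrow> 'a poly poly" where
  "weyl_mult u v =
     (\<Sum>m\<le>degree u. \<Sum>n\<le>degree v. \<Sum>i\<le>m.
        monom (smult (of_nat (m choose i)) (coeff u m * (pderiv ^^ (m - i)) (coeff v n))) (i + n))"

definition weyl_alpha :: "'a::field \<Rightarrow> 'a poly poly \<Rightarrow> 'a poly poly" where
  "weyl_alpha k u = map_poly (\<lambda>p. pcompose p [:k, 1:]) u"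

definition hom_mult :: "'a::field \<Rightarrow> 'a poly poly \<Rightarrow> 'a poly poly \<Rightarrow> 'a poly poly" where
  "hom_mult k u v = weyl_alpha k (weyl_mult u v)"

definition hom_ideal :: "'a::field \<Rightarrow> 'a poly poly set \<Rightarrow> bool" where
  "hom_ideal k I \<longleftrightarrow>
     0 \<in> I \<and> (\<forall>x\<in>I. \<forall>y\<in>I. x + y \<in> I) \<and> (\<forall>x\<in>I. - x \<in> I) \<and>
     (\<forall>a x. x \<in> I \<longrightarrow> hom_mult k a x \<in> I \<and> hom_mult k x a \<in> I)"

end

theory Submission imports Defs begin

lemma funpow_pderiv_0: "(pderiv ^^ j) (0::'a::field poly) = 0"
  by (induction j) auto

lemma funpow_pderiv_const: "(pderiv ^^ j) [:c::'a::field:] = (if j = 0 then [:c:] else 0)"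
  by (induction j) (auto simp: funpow_pderiv_0 pderiv_pCons)

lemma map_poly_as_sum:
  assumes "f 0 = 0"
  shows "map_poly f u = (\<Sum>n\<le>degree u. monom (f (coeff u n)) n)"
proof (rule poly_eqI)
  fix j
  show "coeff (map_poly f u) j = coeff (\<Sum>n\<le>degree u. monom (f (coeff u n)) n) j"
    using assms by (auto simp: coeff_map_poly coeff_sum coeff_monom coeff_eq_0)
qed

lemma pCons0_as_sum:
  "pCons 0 u = (\<Sum>n\<le>degree u. monom (coeff u n) (Suc n))"
proof (rule poly_eqI)
  fix j
  show "coeff (pCons 0 u) j = coeff (\<Sum>n\<le>degree u. monom (coeff u n) (Suc n)) j"
    by (cases j) (auto simp: coeff_sum coeff_eq_0)
qed

lemma weyl_X_left:
  "weyl_mult (monom 1 1) u = map_poly pderiv u + pCons 0 (u::'a::field poly poly)"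
proof -
  have d: "degree (monom (1::'a poly) 1) = 1" by (simp add: degree_monom_eq)
  have "weyl_mult (monom 1 1) u = (\<Sum>n\<le>degree u. monom (pderiv (coeff u n)) n + monom (coeff u n) (Suc n))"
    unfolding weyl_mult_def d by (simp add: coeff_monom)
  also have "\<dots> = map_poly pderiv u + pCons 0 u"
    by (simp add: sum.distrib map_poly_as_sum[of pderiv] pCons0_as_sum)
  finally show ?thesis .
qed

lemma funpow_pderiv_1: "(pderiv ^^ j) (1::'a::field poly) = (if j = 0 then 1 else 0)"
  by (induction j) (auto simp: funpow_pderiv_0)

lemma funpow_pderiv_Y: "(pderiv ^^ j) [:0, 1::'a::field:] = (if j = 0 then [:0,1:] else if j = 1 then 1 else 0)"
proof (cases j)
  case (Suc j')
  then show ?thesis by (simp add: funpow_swap1 pderiv_pCons funpow_pderiv_1 one_pCons[symmetric])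
qed simp

lemma weyl_X_right:
  "weyl_mult u (monom 1 1) = pCons 0 (u::'a::field poly poly)"
proof -
  have d: "degree (monom (1::'a poly) 1) = 1" by (simp add: degree_monom_eq)
  have inner: "(\<Sum>i\<le>m. monom (smult (of_nat (m choose i)) (coeff u m * (pderiv ^^ (m - i)) 1)) (Suc i))
      = monom (coeff u m) (Suc m)" for m
  proof -
    have "(\<Sum>i\<le>m. monom (smult (of_nat (m choose i)) (coeff u m * (pderiv ^^ (m - i)) 1)) (Suc i))
      = (\<Sum>i\<le>m. if i = m then monom (coeff u m) (Suc m) else 0)"
      by (rule sum.cong) (auto simp: funpow_pderiv_1)
    then show ?thesis by simp
  qed
  have "weyl_mult u (monom 1 1) = (\<Sum>m\<le>degree u. monom (coeff u m) (Suc m))"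
    unfolding weyl_mult_def d by (simp add: coeff_monom funpow_pderiv_0 inner)
  then show ?thesis by (simp add: pCons0_as_sum)
qed

lemma weyl_Y_left:
  "weyl_mult [:[:0,1:]:] u = smult [:0,1:] (u::'a::field poly poly)"
proof -
  have "weyl_mult [:[:0,1:]:] u = (\<Sum>n\<le>degree u. monom ([:0,1:] * coeff u n) n)"
    unfolding weyl_mult_def by simp
  also have "\<dots> = smult [:0,1:] u"
    by (subst (3) poly_as_sum_of_monoms[symmetric]) (simp add: smult_sum smult_monom)
  finally show ?thesis .
qed

lemma weyl_Y_right:
  "weyl_mult u [:[:0,1:]:] = smult [:0,1:] u + pderiv (u::'a::field poly poly)"
proof -
  have inner: "(\<Sum>i\<le>m. monom (smult (of_nat (m choose i)) (coeff u m * (pderiv ^^ (m - i)) [:0,1:])) i)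
      = monom ([:0,1:] * coeff u m) m + (if m = 0 then 0 else monom (of_nat m * coeff u m) (m - 1))" for m
  proof -
    have "(\<Sum>i\<le>m. monom (smult (of_nat (m choose i)) (coeff u m * (pderiv ^^ (m - i)) [:0,1:])) i)
      = (\<Sum>i\<le>m. (if i = m then monom ([:0,1:] * coeff u m) m else 0)
           + (if Suc i = m then monom (of_nat m * coeff u m) (m - 1) else 0))"
    proof (rule sum.cong)
      fix i assume "i \<in> {..m}"
      then show "monom (smult (of_nat (m choose i)) (coeff u m * (pderiv ^^ (m - i)) [:0,1:])) i =
        (if i = m then monom ([:0,1:] * coeff u m) m else 0)
           + (if Suc i = m then monom (of_nat m * coeff u m) (m - 1) else 0)"
        by (auto simp: funpow_pderiv_Y mult.commute of_nat_mult_conv_smult)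
    qed simp
    also have "\<dots> = monom ([:0,1:] * coeff u m) m + (if m = 0 then 0 else monom (of_nat m * coeff u m) (m - 1))"
      by (cases m) (auto simp: sum.distrib)
    finally show ?thesis .
  qed
  have "weyl_mult u [:[:0,1:]:] = (\<Sum>m\<le>degree u. monom ([:0,1:] * coeff u m) m)
     + (\<Sum>m\<le>degree u. (if m = 0 then 0 else monom (of_nat m * coeff u m) (m - 1)))"
    unfolding weyl_mult_def by (simp add: inner sum.distrib)
  also have "(\<Sum>m\<le>degree u. monom ([:0,1:] * coeff u m) m) = smult [:0,1:] u"
    by (subst (3) poly_as_sum_of_monoms[symmetric]) (simp add: smult_sum smult_monom)
  also have "(\<Sum>m\<le>degree u. (if m = 0 then 0 else monom (of_nat m * coeff u m) (m - 1))) = pderiv u"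
  proof (rule poly_eqI)
    fix j
    show "coeff (\<Sum>m\<le>degree u. (if m = 0 then 0 else monom (of_nat m * coeff u m) (m - 1))) j = coeff (pderiv u) j"
    proof (cases "Suc j \<le> degree u")
      case True
      have "coeff (\<Sum>m\<le>degree u. (if m = 0 then 0 else monom (of_nat m * coeff u m) (m - 1))) j
        = (\<Sum>m\<le>degree u. if m = Suc j then of_nat m * coeff u m else 0)"
        unfolding coeff_sum by (rule sum.cong) (auto simp: coeff_monom)
      then show ?thesis using True by (simp add: coeff_pderiv)
    next
      case False
      have "coeff (\<Sum>m\<le>degree u. (if m = 0 then 0 else monom (of_nat m * coeff u m) (m - 1))) j = 0"
        unfolding coeff_sum by (rule sum.neutral) (use False in \<open>auto simp: coeff_monom\<close>)
      then show ?thesis using False by (simp add: coeff_pderiv coeff_eq_0)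
    qed
  qed
  finally show ?thesis .
qed

lemma coeff_alpha: "coeff (weyl_alpha k u) n = pcompose (coeff u n) [:k, 1:]"
  unfolding weyl_alpha_def by (simp add: coeff_map_poly)

lemma alpha_diff: "weyl_alpha k (u - v) = weyl_alpha k u - weyl_alpha k v"
  by (rule poly_eqI) (simp add: coeff_alpha pcompose_diff)

lemma alpha_inv: "weyl_alpha (k::'a::field) (weyl_alpha (-k) u) = u"
proof (rule poly_eqI)
  fix n
  have "pcompose (pcompose (coeff u n) [:-k, 1:]) [:k, 1:] = pcompose (coeff u n) (pcompose [:-k, 1:] [:k, 1:])"
    by (simp add: pcompose_assoc)
  also have "pcompose [:-k, 1:] [:k, 1:] = [:0, 1::'a:]"
    by (simp add: pcompose_pCons one_pCons)
  finally show "coeff (weyl_alpha k (weyl_alpha (-k) u)) n = coeff u n"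
    by (simp add: coeff_alpha)
qed

lemma pcompose_lin_eq_0: "pcompose p [:k, 1::'a::field:] = 0 \<longleftrightarrow> p = 0"
proof
  assume "pcompose p [:k, 1:] = 0"
  then have "pcompose (pcompose p [:k, 1:]) [:-k, 1:] = 0" by simp
  moreover have "pcompose (pcompose p [:k, 1:]) [:-k, 1:] = p"
    by (simp add: pcompose_assoc[symmetric] pcompose_pCons one_pCons)
  ultimately show "p = 0" by simp
qed simp

lemma degree_alpha: "degree (weyl_alpha (k::'a::field) u) = degree u"
  unfolding weyl_alpha_def by (rule degree_map_poly) (simp add: pcompose_lin_eq_0)

lemma alpha_eq_0: "weyl_alpha (k::'a::field) u = 0 \<longleftrightarrow> u = 0"
proof
  assume "weyl_alpha k u = 0"
  then have "weyl_alpha (-k) (weyl_alpha (- (-k)) u) = weyl_alpha (-k) 0" by simp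
  then show "u = 0" unfolding alpha_inv by (simp add: weyl_alpha_def)
qed (simp add: weyl_alpha_def)

lemma weyl_const_left:
  "weyl_mult [:q:] u = smult q (u::'a::field poly poly)"
proof -
  have "weyl_mult [:q:] u = (\<Sum>n\<le>degree u. monom (q * coeff u n) n)"
    unfolding weyl_mult_def by simp
  also have "\<dots> = smult q u"
    by (subst (3) poly_as_sum_of_monoms[symmetric]) (simp add: smult_sum smult_monom)
  finally show ?thesis .
qed

lemma closeD1:
  assumes "hom_ideal k I" "x \<in> I"
  shows "weyl_alpha k (map_poly pderiv x) \<in> I"
proof -
  have "hom_mult k (monom 1 1) x + - hom_mult k x (monom 1 1) \<in> I"
    using assms unfolding hom_ideal_def by blast
  also have "hom_mult k (monom 1 1) x + - hom_mult k x (monom 1 1) = weyl_alpha k (map_poly pderiv x)"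
    unfolding hom_mult_def weyl_X_left weyl_X_right
    by (simp only: diff_conv_add_uminus[symmetric] alpha_diff[symmetric]) simp
  finally show ?thesis .
qed

lemma closeD2:
  assumes "hom_ideal k I" "x \<in> I"
  shows "weyl_alpha k (pderiv x) \<in> I"
proof -
  have "hom_mult k x [:[:0,1:]:] + - hom_mult k [:[:0,1:]:] x \<in> I"
    using assms unfolding hom_ideal_def by blast
  also have "hom_mult k x [:[:0,1:]:] + - hom_mult k [:[:0,1:]:] x = weyl_alpha k (pderiv x)"
    unfolding hom_mult_def weyl_Y_left weyl_Y_right
    by (simp only: diff_conv_add_uminus[symmetric] alpha_diff[symmetric]) simp
  finally show ?thesis .
qed

lemma stepA:
  fixes k :: "'a::field_char_0"
  assumes "hom_ideal k I"
  shows "x \<in> I \<Longrightarrow> x \<noteq> 0 \<Longrightarrow> degree x = n \<Longrightarrow> \<exists>y\<in>I. y \<noteq> 0 \<and> degree y = 0"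
proof (induction n arbitrary: x)
  case 0
  then show ?case by blast
next
  case (Suc n)
  let ?z = "weyl_alpha k (pderiv x)"
  have "?z \<in> I" using closeD2[OF assms Suc.prems(1)] .
  moreover have "degree ?z = n" using Suc.prems by (simp add: degree_alpha degree_pderiv)
  moreover have "?z \<noteq> 0" using Suc.prems by (simp add: alpha_eq_0 pderiv_eq_0_iff)
  ultimately show ?case using Suc.IH by blast
qed

lemma stepB:
  fixes k :: "'a::field_char_0"
  assumes "hom_ideal k I"
  shows "[:p:] \<in> I \<Longrightarrow> p \<noteq> 0 \<Longrightarrow> degree p = n \<Longrightarrow> \<exists>c. c \<noteq> 0 \<and> [:[:c:]:] \<in> I"
proof (induction n arbitrary: p)
  case 0
  then obtain a where "p = [:a:]" by (auto elim!: degree_eq_zeroE)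
  then show ?case using 0 by auto
next
  case (Suc n)
  let ?q = "pcompose (pderiv p) [:k, 1:]"
  have e: "weyl_alpha k (map_poly pderiv [:p:]) = [:?q:]"
    unfolding weyl_alpha_def by (simp add: map_poly_pCons)
  have "[:?q:] \<in> I" using closeD1[OF assms Suc.prems(1)] e by simp
  moreover have "degree ?q = n" using Suc.prems by (simp add: degree_pcompose degree_pderiv)
  moreover have "?q \<noteq> 0" using Suc.prems by (simp add: pcompose_lin_eq_0 pderiv_eq_0_iff)
  ultimately show ?case using Suc.IH by blast
qed

theorem mainTheorem11:
  fixes k :: "'a::field_char_0" and I :: "'a poly poly set"
  assumes "hom_ideal k I"
  shows "I = {0} \<or> I = UNIV"
proof (cases "I = {0}")
  case False
  have "0 \<in> I" using assms unfolding hom_ideal_def by blast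
  with False obtain x where x: "x \<in> I" "x \<noteq> 0" by blast
  obtain y where y: "y \<in> I" "y \<noteq> 0" "degree y = 0" using stepA[OF assms x refl] by blast
  have yc: "y = [:coeff y 0:]" using y(3) by (rule degree_0_id[symmetric])
  have "[:coeff y 0:] \<in> I" "coeff y 0 \<noteq> 0" using y yc by (metis, metis pCons_0_0)
  then obtain c where c: "c \<noteq> 0" "[:[:c:]:] \<in> I"
    using stepB[OF assms _ _ refl, of "coeff y 0"] by blast
  have "b \<in> I" for b
  proof -
    have "hom_mult k [:[:c:]:] (smult [:inverse c:] (weyl_alpha (-k) b)) \<in> I"
      using assms c(2) unfolding hom_ideal_def by blast
    also have "hom_mult k [:[:c:]:] (smult [:inverse c:] (weyl_alpha (-k) b)) = b"
      using c(1) by (simp add: hom_mult_def weyl_const_left alpha_inv one_pCons[symmetric])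
    finally show ?thesis .
  qed
  then show ?thesis by blast
qed simp

end
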